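(* Let $n$ be a positive integer, let $A(n)=(a_{ij})_{i,j\in\mathbb{N}}$ be the greedy matrix described in the context, and let $k,r\geq 1$. Let $\overline{A}=A^{kr}$ be the partial matrix described in the context, and let $x$ be the number of ones in the $k$-th row of $\overline{A}$. Then the number of integers $l\geq 1$ such that the cell $(k,l)$ is a galf of $\overline{A}$ is at most $x n^2$.
   Context: $\mathbb{N}=\{1,2,3,\dots\}$. Fix a positive integer $n$. The infinite $\{0,1\}$-matrix $A(n)=(a_{ij})_{i,j\in\mathbb{N}}$ (the greedy matrix) is defined recursively. Its entries are determined row by row (row $1$ first), and within each row from left to right, so that $a_{kl}$ is determined after all $a_{ij}$ with $i<k$ and all $a_{kj}$ with $j<l$. One sets $a_{kl}=1$ if and only if all of the following hold: (1) $\sum_{j<l}a_{kj}<n+1$; (2) $\sum_{i<k}a_{il}<n+1$; (3) there is no pair $(i,j)$ with $1\le i<k$, $1\le j<l$ and $a_{ij}=a_{il}=a_{kj}=1$. Otherwise $a_{kl}=0$. For $k,r\ge 1$, $A^{kr}$ denotes the $\mathbb{N}\times\mathbb{N}$ matrix that agrees with $A(n)$ in all entries of rows $1,\dots,k-1$ and in the entries $(k,1),\dots,(k,r-1)$, and is $0$ in all other entries (the matrix constructed so far just before $a_{kr}$ is determined). For a $\{0,1\}$-matrix $M=(m_{ij})$, a cell $(i,j)$ is a flag if $m_{ij}=1$, and it is a galf of $M$ if there exists a flag $(k',l')$ of $M$ with $k'\neq i$, $l'\neq j$ and $m_{k'l'}=m_{k'j}=m_{il'}=1$. *)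

theory Defs
  imports Main
begin

text \<open>Matrices are represented as nat => nat => bool (True = entry 1).
  Only indices >= 1 are meaningful; entries with index 0 are always False.\<close>

text \<open>Rule for a_kl, given the completed rows 1..k-1 (M) and the entries R j of
  row k for j < l.\<close>
definition greedy_cond :: "nat \<Rightarrow> (nat \<Rightarrow> nat \<Rightarrow> bool) \<Rightarrow> nat \<Rightarrow> (nat \<Rightarrow> bool) \<Rightarrow> nat \<Rightarrow> bool" where
  "greedy_cond n M k R l \<longleftrightarrow>
     card {j. 1 \<le> j \<and> j < l \<and> R j} < n + 1 \<and>
     card {i. 1 \<le> i \<and> i < k \<and> M i l} < n + 1 \<and>
     \<not> (\<exists>i j. 1 \<le> i \<and> i < k \<and> 1 \<le> j \<and> j < l \<and> M i j \<and> M i l \<and> R j)"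

primrec greedy_row_prefix :: "nat \<Rightarrow> (nat \<Rightarrow> nat \<Rightarrow> bool) \<Rightarrow> nat \<Rightarrow> nat \<Rightarrow> nat \<Rightarrow> bool" where
  "greedy_row_prefix n M k 0 = (\<lambda>_. False)"
| "greedy_row_prefix n M k (Suc l) =
     (let R = greedy_row_prefix n M k l
      in R(l := (1 \<le> l \<and> greedy_cond n M k R l)))"

primrec greedy_rows :: "nat \<Rightarrow> nat \<Rightarrow> nat \<Rightarrow> nat \<Rightarrow> bool" where
  "greedy_rows n 0 = (\<lambda>_ _. False)"
| "greedy_rows n (Suc k) =
     (let M = greedy_rows n k
      in M(Suc k := (\<lambda>l. greedy_row_prefix n M (Suc k) (Suc l) l)))"

definition greedy_matrix :: "nat \<Rightarrow> nat \<Rightarrow> nat \<Rightarrow> bool" where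
  "greedy_matrix n i j = greedy_rows n i i j"

definition partial_matrix :: "nat \<Rightarrow> nat \<Rightarrow> nat \<Rightarrow> nat \<Rightarrow> nat \<Rightarrow> bool" where
  "partial_matrix n k r i j =
     (if i < k \<or> (i = k \<and> j < r) then greedy_matrix n i j else False)"

definition is_flag :: "(nat \<Rightarrow> nat \<Rightarrow> bool) \<Rightarrow> nat \<Rightarrow> nat \<Rightarrow> bool" where
  "is_flag M i j \<longleftrightarrow> M i j"

definition is_galf :: "(nat \<Rightarrow> nat \<Rightarrow> bool) \<Rightarrow> nat \<Rightarrow> nat \<Rightarrow> bool" where
  "is_galf M i j \<longleftrightarrow>
     (\<exists>k' l'. is_flag M k' l' \<and> k' \<noteq> i \<and> l' \<noteq> j \<and> M k' j \<and> M i l')"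

end

theory Submission
  imports Defs
begin

lemma gr_Suc: "greedy_rows n (Suc k) i = (if i = Suc k then (\<lambda>l. greedy_row_prefix n (greedy_rows n k) (Suc k) (Suc l) l) else greedy_rows n k i)"
  by (simp only: greedy_rows.simps Let_def fun_upd_apply)
lemma gp_Suc: "greedy_row_prefix n M k (Suc l) j = (if j = l then 1 \<le> l \<and> greedy_cond n M k (greedy_row_prefix n M k l) l else greedy_row_prefix n M k l j)"
  by (simp only: greedy_row_prefix.simps Let_def fun_upd_apply)
declare greedy_rows.simps(2)[simp del] greedy_row_prefix.simps(2)[simp del]

lemma rows_high: "k < i \<Longrightarrow> greedy_rows n k i = (\<lambda>_. False)"
  by (induction k) (auto simp: gr_Suc)

lemma rows_stable: "i \<le> k \<Longrightarrow> greedy_rows n k i = greedy_rows n i i"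
proof (induction k)
  case 0 then show ?case by simp
next
  case (Suc k)
  show ?case
  proof (cases "i = Suc k")
    case False
    then have "i \<le> k" using Suc.prems by simp
    then show ?thesis using Suc.IH False by (simp only: gr_Suc if_False)
  qed simp
qed

lemma prefix_stable:
  "greedy_row_prefix n M k L j = (j < L \<and> greedy_row_prefix n M k (Suc j) j)"
proof (induction L)
  case 0 then show ?case by simp
next
  case (Suc L)
  show ?case
  proof (cases "j = L")
    case True then show ?thesis by (simp add: gp_Suc)
  next
    case False
    then show ?thesis using Suc.IH by (simp only: gp_Suc if_False) auto
  qed
qed

lemma a_zero_row: "\<not> greedy_matrix n 0 j"
  by (simp add: greedy_matrix_def)

lemma a_formula:
  "greedy_matrix n (Suc m) j =
     (1 \<le> j \<and> greedy_cond n (greedy_rows n m) (Suc m)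
        (\<lambda>t. t < j \<and> greedy_matrix n (Suc m) t) j)"
proof -
  have pf: "greedy_row_prefix n (greedy_rows n m) (Suc m) j = (\<lambda>t. t < j \<and> greedy_matrix n (Suc m) t)"
  proof
    fix t
    show "greedy_row_prefix n (greedy_rows n m) (Suc m) j t = (t < j \<and> greedy_matrix n (Suc m) t)"
      by (subst prefix_stable) (simp add: greedy_matrix_def gr_Suc)
  qed
  have "greedy_matrix n (Suc m) j = greedy_row_prefix n (greedy_rows n m) (Suc m) (Suc j) j"
    by (simp add: greedy_matrix_def gr_Suc)
  also have "\<dots> = (1 \<le> j \<and> greedy_cond n (greedy_rows n m) (Suc m)
        (greedy_row_prefix n (greedy_rows n m) (Suc m) j) j)"
    by (simp add: gp_Suc)
  finally show ?thesis using pf by simp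
qed

lemma a_col0: "greedy_matrix n i j \<Longrightarrow> 1 \<le> j"
proof (cases i)
  case 0 then show "greedy_matrix n i j \<Longrightarrow> 1 \<le> j" using a_zero_row by simp
next
  case (Suc m)
  then show "greedy_matrix n i j \<Longrightarrow> 1 \<le> j" using a_formula[of n m j] by blast
qed

lemma rows_eq: "i \<le> m \<Longrightarrow> greedy_rows n m i l = greedy_matrix n i l"
  unfolding greedy_matrix_def by (subst rows_stable) auto

lemma row_cnt:
  assumes "greedy_matrix n i j"
  shows "card {t. 1 \<le> t \<and> t < j \<and> greedy_matrix n i t} \<le> n"
proof (cases i)
  case 0 then show ?thesis using assms a_zero_row by simp
next
  case (Suc m)
  have "greedy_cond n (greedy_rows n m) (Suc m) (\<lambda>t. t < j \<and> greedy_matrix n (Suc m) t) j"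
    using a_formula[of n m j] assms Suc by blast
  then show ?thesis unfolding greedy_cond_def Suc by simp
qed

lemma col_cnt:
  assumes "greedy_matrix n (Suc m) j"
  shows "card {i. 1 \<le> i \<and> i < Suc m \<and> greedy_matrix n i j} \<le> n"
proof -
  have e: "{i. 1 \<le> i \<and> i < Suc m \<and> greedy_rows n m i j} = {i. 1 \<le> i \<and> i < Suc m \<and> greedy_matrix n i j}"
    using rows_eq by auto
  have "greedy_cond n (greedy_rows n m) (Suc m) (\<lambda>t. t < j \<and> greedy_matrix n (Suc m) t) j"
    using a_formula[of n m j] assms by blast
  then have "card {i. 1 \<le> i \<and> i < Suc m \<and> greedy_rows n m i j} < n + 1" unfolding greedy_cond_def by blast
  then show ?thesis using e by simp
qed

lemma prefix_bound: "card {t. 1 \<le> t \<and> t < L \<and> greedy_matrix n i t} \<le> n + 1"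
proof (induction L)
  case 0 then show ?case by simp
next
  case (Suc L)
  show ?case
  proof (cases "greedy_matrix n i L")
    case True
    have "{t. 1 \<le> t \<and> t < Suc L \<and> greedy_matrix n i t} = insert L {t. 1 \<le> t \<and> t < L \<and> greedy_matrix n i t}"
      using True a_col0 by auto
    moreover have "finite {t. 1 \<le> t \<and> t < L \<and> greedy_matrix n i t}" by simp
    ultimately have "card {t. 1 \<le> t \<and> t < Suc L \<and> greedy_matrix n i t} \<le> Suc (card {t. 1 \<le> t \<and> t < L \<and> greedy_matrix n i t})"
      by (simp add: card_insert_if)
    then show ?thesis using row_cnt[OF True] by simp
  next
    case False
    then have "{t. 1 \<le> t \<and> t < Suc L \<and> greedy_matrix n i t} = {t. 1 \<le> t \<and> t < L \<and> greedy_matrix n i t}"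
      using less_Suc_eq by auto
    then show ?thesis using Suc.IH by simp
  qed
qed

lemma row_bound:
  "finite {t. 1 \<le> t \<and> greedy_matrix n i t} \<and> card {t. 1 \<le> t \<and> greedy_matrix n i t} \<le> n + 1"
proof -
  let ?S = "{t. 1 \<le> t \<and> greedy_matrix n i t}"
  have sub: "card B \<le> n + 1" if "B \<subseteq> ?S" "finite B" for B
  proof (cases "B = {}")
    case True then show ?thesis by simp
  next
    case False
    have "B \<subseteq> {t. 1 \<le> t \<and> t < Suc (Max B) \<and> greedy_matrix n i t}"
    proof
      fix t assume t: "t \<in> B"
      then have "t \<le> Max B" using that(2) by simp
      moreover have "t \<in> ?S" using t that(1) by blast
      ultimately show "t \<in> {t. 1 \<le> t \<and> t < Suc (Max B) \<and> greedy_matrix n i t}" by simp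
    qed
    then have "card B \<le> card {t. 1 \<le> t \<and> t < Suc (Max B) \<and> greedy_matrix n i t}"
      by (intro card_mono) auto
    then show ?thesis using prefix_bound[of "Suc (Max B)" n i] by simp
  qed
  have fin: "finite ?S"
  proof (rule ccontr)
    assume "infinite ?S"
    then obtain B where "B \<subseteq> ?S" "finite B" "card B = n + 2"
      using infinite_arbitrarily_large by blast
    then have "card B \<le> n + 1" using sub by blast
    then show False using \<open>card B = n + 2\<close> by simp
  qed
  then show ?thesis using sub by blast
qed

theorem lemma3p1:
  fixes n k r :: nat
  assumes "1 \<le> n" and "1 \<le> k" and "1 \<le> r"
  defines "Abar \<equiv> partial_matrix n k r"
  defines "x \<equiv> card {j. 1 \<le> j \<and> Abar k j}"
  shows "finite {l. 1 \<le> l \<and> is_galf Abar k l}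
         \<and> card {l. 1 \<le> l \<and> is_galf Abar k l} \<le> x * n ^ 2"
proof -
  let ?a = "greedy_matrix n"
  let ?G = "{l. 1 \<le> l \<and> is_galf Abar k l}"
  define X where "X = {j. 1 \<le> j \<and> Abar k j}"
  define C where "C l' = {k'. 1 \<le> k' \<and> k' < k \<and> ?a k' l'}" for l'
  define R where "R k' = {j. 1 \<le> j \<and> ?a k' j}" for k'
  obtain m where km: "k = Suc m" using assms(2) by (cases k) auto
  have Xeq: "X = {j. 1 \<le> j \<and> j < r \<and> ?a k j}"
    by (auto simp: X_def Abar_def partial_matrix_def)
  have finX: "finite X" unfolding Xeq by (rule finite_subset[of _ "{..<r}"]) auto
  have finC: "finite (C l')" for l' unfolding C_def by (rule finite_subset[of _ "{..<k}"]) auto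
  have finR: "finite (R k')" for k' using row_bound unfolding R_def by blast
  have sub: "?G \<subseteq> (\<Union>l'\<in>X. \<Union>k'\<in>C l'. R k' - {l'})"
  proof
    fix l assume "l \<in> ?G"
    then obtain k' l' where h: "Abar k' l'" "k' \<noteq> k" "l' \<noteq> l" "Abar k' l" "Abar k l'" "1 \<le> l"
      by (auto simp: is_galf_def is_flag_def)
    have k'k: "k' < k" and a1: "?a k' l" and a2: "?a k' l'"
      using h(1,2,4) by (auto simp: Abar_def partial_matrix_def split: if_splits)
    have k'1: "1 \<le> k'" using a1 a_zero_row by (cases k') auto
    have "l' \<in> X" using h(5) a_col0 by (auto simp: X_def Abar_def partial_matrix_def split: if_splits)
    moreover have "k' \<in> C l'" using k'k a2 k'1 by (simp add: C_def)
    moreover have "l \<in> R k' - {l'}" using a1 h(3,6) by (simp add: R_def)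
    ultimately show "l \<in> (\<Union>l'\<in>X. \<Union>k'\<in>C l'. R k' - {l'})" by blast
  qed
  have finU: "finite (\<Union>l'\<in>X. \<Union>k'\<in>C l'. R k' - {l'})" using finX finC finR by auto
  have inner: "card (\<Union>k'\<in>C l'. R k' - {l'}) \<le> n * n" if "l' \<in> X" for l'
  proof -
    have akl: "?a k l'" using that Xeq by simp
    have cC: "card (C l') \<le> n" using col_cnt[of n m l'] akl km by (simp add: C_def)
    have cR: "card (R k' - {l'}) \<le> n" if "k' \<in> C l'" for k'
    proof -
      have "l' \<in> R k'" using that a_col0 by (auto simp: C_def R_def)
      then have "card (R k' - {l'}) = card (R k') - 1" using finR by simp
      moreover have "card (R k') \<le> n + 1" using row_bound unfolding R_def by blast
      ultimately show ?thesis by simp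
    qed
    have "card (\<Union>k'\<in>C l'. R k' - {l'}) \<le> (\<Sum>k'\<in>C l'. card (R k' - {l'}))"
      by (rule card_UN_le[OF finC])
    also have "\<dots> \<le> card (C l') * n" using sum_bounded_above[of "C l'" "\<lambda>k'. card (R k' - {l'})" n] cR by simp
    also have "\<dots> \<le> n * n" using cC by simp
    finally show ?thesis .
  qed
  have "card ?G \<le> card (\<Union>l'\<in>X. \<Union>k'\<in>C l'. R k' - {l'})" by (rule card_mono[OF finU sub])
  also have "\<dots> \<le> (\<Sum>l'\<in>X. card (\<Union>k'\<in>C l'. R k' - {l'}))" by (rule card_UN_le[OF finX])
  also have "\<dots> \<le> card X * (n * n)" using sum_bounded_above[of X _ "n*n"] inner by simp
  also have "\<dots> = x * n ^ 2" by (simp add: X_def x_def power2_eq_square)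
  finally show ?thesis using finite_subset[OF sub finU] by simp
qed

end
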